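(* Let $u\in\mathcal H_k$ and let $\lambda_1,\lambda_2,\dots$ be selected from $\Lambda\subset\mathcal H_k'$ by a PDE-$\beta$-greedy algorithm with $\beta\in[0,\infty]$ applied to $u$, and let $r_i:=u-\Pi_{V(\Lambda_i)}(u)$. Then for $i=0,1,\dots$: (a) if $\beta\in[0,1]$: $$\sup_{\lambda\in\Lambda}|\lambda(r_i)| \le |\lambda_{i+1}(r_i)|^{\beta}\cdot P_{\Lambda_i}(\lambda_{i+1})^{1-\beta}\cdot\|r_i\|_{\mathcal H_k}^{1-\beta};$$ (b) if $\beta\in(1,\infty]$ (with $1/\infty:=0$): $$\sup_{\lambda\in\Lambda}|\lambda(r_i)| \le \frac{|\lambda_{i+1}(r_i)|}{P_{\Lambda_i}(\lambda_{i+1})^{1-1/\beta}}\cdot\sup_{\lambda\in\Lambda}P_{\Lambda_i}(\lambda)^{1-1/\beta}.$$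
   Context: $\mathcal H_k$ is the reproducing kernel Hilbert space of a kernel $k$; each $\lambda\in\mathcal H_k'$ has Riesz representer $v_\lambda$. For $\Lambda_i=\{\lambda_1,\dots,\lambda_i\}$ ($\Lambda_0=\emptyset$), $V(\Lambda_i)=\mathrm{span}\{v_\mu:\mu\in\Lambda_i\}$, $\Pi_{V(\Lambda_i)}$ the orthogonal projection, and $P_{\Lambda_i}(\lambda):=\|v_\lambda-\Pi_{V(\Lambda_i)}v_\lambda\|_{\mathcal H_k}$ the generalized power function. A PDE-$\beta$-greedy algorithm (for a set $\Lambda$ of functionals, e.g. $\Lambda=\{\delta_x\circ L:x\in\Omega\}\cup\{\delta_x:x\in\partial\Omega\}$) selects, for $\beta\in[0,\infty)$, $\lambda_{n+1}\in\arg\max_{\lambda\in\Lambda\setminus\Lambda_n,\ \lambda\neq0}|\lambda(u-\Pi_{V(\Lambda_n)}u)|^{\beta}\,P_{\Lambda_n}(\lambda)^{1-\beta}$, and for $\beta=\infty$, $\lambda_{n+1}\in\arg\max_{\lambda\in\Lambda\setminus\Lambda_n,\ \lambda\ne0}|\lambda(u-\Pi_{V(\Lambda_n)}u)|/P_{\Lambda_n}(\lambda)$ (maximizers assumed to exist). Special cases: $\beta=0$ PDE-$P$-greedy, $\beta=1/2$ PDE-$f\cdot P$-greedy, $\beta=1$ PDE-$f$-greedy, $\beta=\infty$ PDE-$f/P$-greedy. *)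

theory Defs
  imports "HOL-Analysis.Analysis"
begin

text \<open>The RKHS H_k is modelled as an abstract real Hilbert space 'h; every bounded
linear functional lambda is identified with its Riesz representer v_lambda, so that
lambda(f) = inner v_lambda f.  Sets of functionals are sets of representers.\<close>

definition orth_proj :: "'h::real_inner set \<Rightarrow> 'h \<Rightarrow> 'h" where
  "orth_proj S x = (THE p. p \<in> span S \<and> (\<forall>w\<in>span S. inner (x - p) w = 0))"

definition power_fun :: "'h::real_inner set \<Rightarrow> 'h \<Rightarrow> real" where
  "power_fun S v = norm (v - orth_proj S v)"

definition residual :: "'h::real_inner set \<Rightarrow> 'h \<Rightarrow> 'h" where
  "residual S u = u - orth_proj S u"

text \<open>Real power with the usual conventions x^0 = 1 (also for x = 0) and 0^a = 0 for a > 0.\<close>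
definition rpow :: "real \<Rightarrow> real \<Rightarrow> real" where
  "rpow x a = (if a = 0 then 1 else x powr a)"

definition sel :: "(nat \<Rightarrow> 'h) \<Rightarrow> nat \<Rightarrow> 'h set" where
  "sel lam n = lam ` {1..n}"

definition greedy_score :: "ereal \<Rightarrow> 'h::real_inner set \<Rightarrow> 'h \<Rightarrow> 'h \<Rightarrow> real" where
  "greedy_score \<beta> S u v =
     (if \<beta> = \<infinity> then \<bar>inner v (residual S u)\<bar> / power_fun S v
      else rpow \<bar>inner v (residual S u)\<bar> (real_of_ereal \<beta>)
           * rpow (power_fun S v) (1 - real_of_ereal \<beta>))"

definition greedy_step :: "'h::real_inner set \<Rightarrow> ereal \<Rightarrow> 'h \<Rightarrow> (nat \<Rightarrow> 'h) \<Rightarrow> nat \<Rightarrow> bool" where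
  "greedy_step \<Lambda> \<beta> u lam n \<longleftrightarrow>
     lam (Suc n) \<in> \<Lambda> - sel lam n \<and> lam (Suc n) \<noteq> 0 \<and>
     (\<forall>\<mu>\<in>\<Lambda> - sel lam n. \<mu> \<noteq> 0 \<longrightarrow>
        greedy_score \<beta> (sel lam n) u \<mu> \<le> greedy_score \<beta> (sel lam n) u (lam (Suc n)))"

end

theory Submission
  imports Defs
begin


lemma proj_exists:
  fixes S :: "'h::real_inner set"
  assumes "finite S"
  shows "\<exists>p. p \<in> span S \<and> (\<forall>w\<in>span S. inner (x - p) w = 0)"
  using assms
proof (induction S arbitrary: x rule: finite_induct)
  case empty
  then show ?case by (intro exI[of _ 0]) auto
next
  case (insert a T)
  obtain pa where pa: "pa \<in> span T" "\<forall>w\<in>span T. inner (a - pa) w = 0"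
    using insert.IH by blast
  obtain px where px: "px \<in> span T" "\<forall>w\<in>span T. inner (x - px) w = 0"
    using insert.IH by blast
  define a' where "a' = a - pa"
  define c where "c = inner x a' / inner a' a'"
  define p where "p = px + c *\<^sub>R a'"
  have a'T: "\<forall>w\<in>span T. inner a' w = 0" using pa a'_def by simp
  have "p \<in> span (insert a T)"
    unfolding p_def a'_def
    by (meson pa(1) px(1) span_add span_base span_diff span_mono span_mul insertI1 subset_insertI subsetD)
  moreover have "\<forall>w\<in>span (insert a T). inner (x - p) w = 0"
  proof
    fix w assume "w \<in> span (insert a T)"
    then obtain k where k: "w - k *\<^sub>R a \<in> span T"
      using span_insert[of a T] by auto
    define t where "t = w - k *\<^sub>R a"
    have t: "t \<in> span T" and w: "w = t + k *\<^sub>R a" using k t_def by auto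
    have xpt: "inner (x - p) t = 0"
      using px t a'T unfolding p_def by (simp add: inner_diff_left inner_add_left)
    have pxa': "inner px a' = 0" using a'T px(1) by (metis inner_commute)
    have "inner (x - p) a' = 0"
    proof (cases "a' = 0")
      case True then show ?thesis by simp
    next
      case False
      then have "inner a' a' \<noteq> 0" by simp
      then show ?thesis unfolding p_def c_def
        by (simp add: inner_diff_left inner_add_left pxa')
    qed
    moreover have "inner (x - p) pa = 0"
    proof -
      have 1: "inner (x - px) pa = 0" using px pa by blast
      have 2: "inner a' pa = 0" using a'T pa by blast
      have "x - p = (x - px) - c *\<^sub>R a'" unfolding p_def by simp
      then have "inner (x - p) pa = inner (x - px) pa - c * inner a' pa"
        by (simp only: inner_diff_left inner_scaleR_left)
      then show ?thesis using 1 2 by simp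
    qed
    ultimately have "inner (x - p) a = 0"
      by (metis a'_def add.right_neutral diff_add_cancel inner_add_right)
    then show "inner (x - p) w = 0" using xpt w by (simp add: inner_add_right)
  qed
  ultimately show ?case by blast
qed

lemma orth_proj:
  fixes S :: "'h::real_inner set"
  assumes "finite S"
  shows "orth_proj S x \<in> span S \<and> (\<forall>w\<in>span S. inner (x - orth_proj S x) w = 0)"
  unfolding orth_proj_def
proof (rule theI')
  show "\<exists>!p. p \<in> span S \<and> (\<forall>w\<in>span S. inner (x - p) w = 0)"
  proof (rule ex_ex1I)
    show "\<exists>p. p \<in> span S \<and> (\<forall>w\<in>span S. inner (x - p) w = 0)" using proj_exists[OF assms] .
  next
    fix p q assume p: "p \<in> span S \<and> (\<forall>w\<in>span S. inner (x - p) w = 0)"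
      and q: "q \<in> span S \<and> (\<forall>w\<in>span S. inner (x - q) w = 0)"
    have d: "p - q \<in> span S" using p q span_diff by blast
    have "inner (x - p) (p - q) = 0" "inner (x - q) (p - q) = 0" using p q d by auto
    then have "inner (p - q) (p - q) = 0"
      by (smt (verit) inner_diff_left)
    then show "p = q" by simp
  qed
qed

lemma resid_orth:
  fixes S :: "'h::real_inner set"
  assumes "finite S" "w \<in> span S"
  shows "inner w (residual S u) = 0"
  using orth_proj[OF assms(1), of u] assms(2) unfolding residual_def
  by (simp add: inner_commute)

lemma resid_bound:
  fixes S :: "'h::real_inner set"
  assumes "finite S"
  shows "\<bar>inner \<mu> (residual S u)\<bar> \<le> power_fun S \<mu> * norm (residual S u)"
proof -
  have "inner (orth_proj S \<mu>) (residual S u) = 0"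
    using resid_orth[OF assms] orth_proj[OF assms] by blast
  then have "inner \<mu> (residual S u) = inner (\<mu> - orth_proj S \<mu>) (residual S u)"
    by (simp add: inner_diff_left)
  then show ?thesis unfolding power_fun_def using Cauchy_Schwarz_ineq2 by metis
qed



lemma rpow_nonneg: "0 \<le> rpow x a" by (simp add: rpow_def)
lemma rpow_split: "0 \<le> x \<Longrightarrow> 0 \<le> b \<Longrightarrow> b \<le> 1 \<Longrightarrow> x = rpow x b * rpow x (1 - b)"
  unfolding rpow_def
  by (auto simp: powr_add[symmetric] powr_one)
lemma rpow_mono: "0 \<le> x \<Longrightarrow> x \<le> y \<Longrightarrow> 0 \<le> a \<Longrightarrow> rpow x a \<le> rpow y a"
  unfolding rpow_def by (auto intro: powr_mono2)
lemma rpow_mult: "rpow (x * y) a = rpow x a * rpow y a"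
  unfolding rpow_def by (simp add: powr_mult)

theorem lemma4p5:
  fixes \<Lambda> :: "'h::{real_inner, complete_space} set"
    and u :: 'h and lam :: "nat \<Rightarrow> 'h" and \<beta> :: ereal and i :: nat
  assumes beta_nonneg: "0 \<le> \<beta>"
    and greedy: "\<forall>n\<le>i. greedy_step \<Lambda> \<beta> u lam n"
  shows "(\<beta> \<le> 1 \<longrightarrow>
           (SUP \<mu>\<in>\<Lambda>. ereal \<bar>inner \<mu> (residual (sel lam i) u)\<bar>)
             \<le> ereal (rpow \<bar>inner (lam (Suc i)) (residual (sel lam i) u)\<bar> (real_of_ereal \<beta>)
                      * rpow (power_fun (sel lam i) (lam (Suc i))) (1 - real_of_ereal \<beta>)
                      * rpow (norm (residual (sel lam i) u)) (1 - real_of_ereal \<beta>)))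
       \<and> (1 < \<beta> \<longrightarrow>
           (let e = (if \<beta> = \<infinity> then 1 else 1 - 1 / real_of_ereal \<beta>) in
            (SUP \<mu>\<in>\<Lambda>. ereal \<bar>inner \<mu> (residual (sel lam i) u)\<bar>)
             \<le> ereal (\<bar>inner (lam (Suc i)) (residual (sel lam i) u)\<bar>
                      / rpow (power_fun (sel lam i) (lam (Suc i))) e)
               * (SUP \<mu>\<in>\<Lambda>. ereal (rpow (power_fun (sel lam i) \<mu>) e))))"
proof -
  define S where "S = sel lam i"
  define r where "r = residual S u"
  define a where "a = (\<lambda>\<mu>. \<bar>inner \<mu> r\<bar>)"
  define P where "P = power_fun S"
  define R where "R = norm r"
  define l where "l = lam (Suc i)"
  have finS: "finite S" unfolding S_def sel_def by simp
  have bnd: "a \<mu> \<le> P \<mu> * R" for \<mu>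
    unfolding a_def P_def R_def r_def using resid_bound[OF finS] .
  have inS: "\<mu> \<in> S \<Longrightarrow> a \<mu> = 0" for \<mu>
    unfolding a_def r_def using resid_orth[OF finS span_base] by simp
  have a0: "a 0 = 0" unfolding a_def by simp
  have anng: "0 \<le> a \<mu>" for \<mu> unfolding a_def by simp
  have Pnng: "0 \<le> P \<mu>" for \<mu> unfolding P_def power_fun_def by simp
  have Rnng: "0 \<le> R" unfolding R_def by simp
  have gs: "greedy_step \<Lambda> \<beta> u lam i" using greedy by simp
  have lL: "l \<in> \<Lambda>" and lnS: "l \<notin> S" and l0: "l \<noteq> 0"
    and lmax: "\<And>\<mu>. \<mu> \<in> \<Lambda> \<Longrightarrow> \<mu> \<notin> S \<Longrightarrow> \<mu> \<noteq> 0 \<Longrightarrow>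
        greedy_score \<beta> S u \<mu> \<le> greedy_score \<beta> S u l"
    using gs unfolding greedy_step_def S_def l_def by auto
  have Pa0: "P \<mu> = 0 \<Longrightarrow> a \<mu> = 0" for \<mu> using bnd[of \<mu>] anng[of \<mu>] by simp
  have score: "greedy_score \<beta> S u \<mu> = (if \<beta> = \<infinity> then a \<mu> / P \<mu>
      else rpow (a \<mu>) (real_of_ereal \<beta>) * rpow (P \<mu>) (1 - real_of_ereal \<beta>))" for \<mu>
    unfolding greedy_score_def a_def P_def r_def by simp
  have partA: "\<beta> \<le> 1 \<longrightarrow> (SUP \<mu>\<in>\<Lambda>. ereal (a \<mu>))
     \<le> ereal (rpow (a l) (real_of_ereal \<beta>) * rpow (P l) (1 - real_of_ereal \<beta>)
                      * rpow R (1 - real_of_ereal \<beta>))"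
  proof
    assume b1: "\<beta> \<le> 1"
    define b where "b = real_of_ereal \<beta>"
    have bfin: "\<beta> = ereal b" unfolding b_def using b1 beta_nonneg
      by (cases \<beta>) auto
    have b01: "0 \<le> b" "b \<le> 1" using b1 beta_nonneg bfin by auto
    have ninf: "\<beta> \<noteq> \<infinity>" using bfin by simp
    let ?K = "rpow (a l) b * rpow (P l) (1 - b) * rpow R (1 - b)"
    have K0: "0 \<le> ?K" by (simp add: rpow_nonneg)
    have "a \<mu> \<le> ?K" if "\<mu> \<in> \<Lambda>" for \<mu>
    proof (cases "\<mu> \<in> S \<or> \<mu> = 0")
      case True then show ?thesis using inS a0 K0 by auto
    next
      case False
      have "a \<mu> = rpow (a \<mu>) b * rpow (a \<mu>) (1 - b)"
        using rpow_split[OF anng b01] .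
      also have "\<dots> \<le> rpow (a \<mu>) b * rpow (P \<mu> * R) (1 - b)"
        by (intro mult_left_mono rpow_mono anng bnd rpow_nonneg) (use b01 in simp)
      also have "\<dots> = (rpow (a \<mu>) b * rpow (P \<mu>) (1 - b)) * rpow R (1 - b)"
        by (simp add: rpow_mult)
      also have "\<dots> \<le> (rpow (a l) b * rpow (P l) (1 - b)) * rpow R (1 - b)"
        using lmax[OF that] False score ninf b_def
        by (intro mult_right_mono rpow_nonneg) auto
      finally show ?thesis .
    qed
    then show "(SUP \<mu>\<in>\<Lambda>. ereal (a \<mu>)) \<le> ereal (rpow (a l) (real_of_ereal \<beta>) * rpow (P l) (1 - real_of_ereal \<beta>)
                      * rpow R (1 - real_of_ereal \<beta>))"
      unfolding b_def by (intro SUP_least) simp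
  qed
  have partB: "1 < \<beta> \<longrightarrow> (let e = (if \<beta> = \<infinity> then 1 else 1 - 1 / real_of_ereal \<beta>) in
     (SUP \<mu>\<in>\<Lambda>. ereal (a \<mu>)) \<le> ereal (a l / rpow (P l) e) * (SUP \<mu>\<in>\<Lambda>. ereal (rpow (P \<mu>) e)))"
  proof
    assume b1: "1 < \<beta>"
    define e where "e = (if \<beta> = \<infinity> then 1 else 1 - 1 / real_of_ereal \<beta>)"
    define c where "c = a l / rpow (P l) e"
    have e0: "0 < e" using b1 unfolding e_def by (cases \<beta>) auto
    have rp: "rpow x e = x powr e" for x using e0 unfolding rpow_def by simp
    have c0: "0 \<le> c" unfolding c_def using anng rpow_nonneg by simp
    have key: "a \<mu> \<le> c * rpow (P \<mu>) e" if mL: "\<mu> \<in> \<Lambda>" for \<mu>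
    proof (cases "a \<mu> = 0")
      case True then show ?thesis using c0 rpow_nonneg by simp
    next
      case False
      then have apos: "0 < a \<mu>" using anng[of \<mu>] by simp
      have mS: "\<mu> \<notin> S" "\<mu> \<noteq> 0" using False inS a0 by auto
      have Ppos: "0 < P \<mu>" using Pa0[of \<mu>] Pnng[of \<mu>] False by fastforce
      have sc: "greedy_score \<beta> S u \<mu> \<le> greedy_score \<beta> S u l" using lmax[OF mL mS] .
      show ?thesis
      proof (cases "\<beta> = \<infinity>")
        case True
        then have e1: "e = 1" unfolding e_def by simp
        have sc': "a \<mu> / P \<mu> \<le> a l / P l" using sc True score by simp
        have Plpos: "0 < P l"
        proof (rule ccontr)
          assume "\<not> 0 < P l"
          then have "P l = 0" using Pnng[of l] by simp
          moreover have "0 < a \<mu> / P \<mu>" using apos Ppos by simp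
          ultimately show False using sc' by simp
        qed
        have "a \<mu> \<le> (a l / P l) * P \<mu>" using sc' Ppos by (simp add: divide_le_eq mult.commute)
        then show ?thesis unfolding c_def e1 rpow_def using Pnng Plpos by (simp add: powr_one)
      next
        case False
        define b where "b = real_of_ereal \<beta>"
        have bfin: "\<beta> = ereal b" unfolding b_def using b1 False by (cases \<beta>) auto
        have bgt: "1 < b" using b1 bfin by simp
        have eb: "e = 1 - 1 / b" unfolding e_def b_def using False by simp
        have scf: "a \<mu> powr b * P \<mu> powr (1 - b) \<le> a l powr b * P l powr (1 - b)"
          using sc score False bgt unfolding rpow_def b_def by simp
        define X where "X = a \<mu> * P \<mu> powr (- e)"
        define Y where "Y = a l * P l powr (- e)"
        have exb: "- (e * b) = 1 - b" unfolding eb using bgt by (simp add: field_simps)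
        have Xb: "X powr b = a \<mu> powr b * P \<mu> powr (1 - b)"
          unfolding X_def by (simp add: powr_mult powr_powr exb)
        have Yb: "Y powr b = a l powr b * P l powr (1 - b)"
          unfolding Y_def by (simp add: powr_mult powr_powr exb)
        have XY: "X \<le> Y"
        proof (rule ccontr)
          assume "\<not> X \<le> Y"
          then have "Y < X" by simp
          moreover have "0 \<le> Y" unfolding Y_def using anng by simp
          ultimately have "Y powr b < X powr b" using bgt by (intro powr_less_mono2) auto
          then show False using scf Xb Yb by simp
        qed
        have "a \<mu> = X * P \<mu> powr e"
          unfolding X_def using Ppos by (simp add: powr_add[symmetric])
        also have "\<dots> \<le> Y * P \<mu> powr e" using XY by (intro mult_right_mono) auto
        also have "Y = c"
          unfolding Y_def c_def rp by (simp add: powr_minus divide_inverse)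
        finally show ?thesis unfolding rp .
      qed
    qed
    have "(SUP \<mu>\<in>\<Lambda>. ereal (a \<mu>)) \<le> ereal c * (SUP \<mu>\<in>\<Lambda>. ereal (rpow (P \<mu>) e))"
    proof (rule SUP_least)
      fix \<mu> assume mL: "\<mu> \<in> \<Lambda>"
      have "ereal (a \<mu>) \<le> ereal c * ereal (rpow (P \<mu>) e)" using key[OF mL] by simp
      also have "\<dots> \<le> ereal c * (SUP \<mu>\<in>\<Lambda>. ereal (rpow (P \<mu>) e))"
        using c0 mL by (intro ereal_mult_left_mono SUP_upper) auto
      finally show "ereal (a \<mu>) \<le> ereal c * (SUP \<mu>\<in>\<Lambda>. ereal (rpow (P \<mu>) e))" .
    qed
    then show "let e = (if \<beta> = \<infinity> then 1 else 1 - 1 / real_of_ereal \<beta>) in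
     (SUP \<mu>\<in>\<Lambda>. ereal (a \<mu>)) \<le> ereal (a l / rpow (P l) e) * (SUP \<mu>\<in>\<Lambda>. ereal (rpow (P \<mu>) e))"
      unfolding c_def e_def Let_def .
  qed
  show ?thesis using partA partB unfolding a_def r_def P_def R_def l_def S_def by (rule conjI)
qed
end
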